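(* Let $\mathcal{M}$, $(E_d)$ be as in the context and let $F=f^iE_i$ satisfy $\mathrm{Div}(F)=E_i[f^i]=0$. For any planar trees $t_1,\dots,t_p$ ($p\ge0$), the elementary differential of the aroma consisting of the single tree with a free edge $(t_1\cdots t_p\,\times)\curvearrowright\bullet$ vanishes: $$\mathcal{F}^F\big(((t_1\cdots t_p\,\times)\curvearrowright\bullet)_\circlearrowleft\big)=\sum_{i}\Big(\big(\mathcal{F}^F(t_1)\cdots\mathcal{F}^F(t_p)\,E_i\big)\rhd F\Big)^i=0.$$
   Context: Einstein summation is used. $\mathcal{M}$ is a smooth manifold with a global frame $E_1,\dots,E_n$ whose Jacobi brackets have constant structure constants. For vector fields $X_k=x_k^iE_i$, a function $\phi$ and $Y=y^jE_j$, the frozen product acts by $(X_1\cdots X_p)\rhd\phi=x_1^{i_1}\cdots x_p^{i_p}E_{i_1}[\cdots E_{i_p}[\phi]\cdots]$ and $(X_1\cdots X_p)\rhd Y=((X_1\cdots X_p)\rhd y^j)E_j$; $Z^i$ denotes the $i$-th frame component of a vector field $Z$. Planar rooted trees (one decoration $\bullet$): $(t_1\cdots t_p)\curvearrowright\bullet$ is the tree whose root has ordered children subtrees $t_1,\dots,t_p$. Elementary differentials: $\mathcal{F}^F(\bullet)=F$, $\mathcal{F}^F((t_1\cdots t_p)\curvearrowright\bullet)=(\mathcal{F}^F(t_1)\cdots\mathcal{F}^F(t_p))\rhd F$. For the tree with a free edge $u=(t_1\cdots t_p\,\times)\curvearrowright\bullet$ (root with children $t_1,\dots,t_p$ followed by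 an empty input $\times$), $\mathcal{F}^F(u)(X)=(\mathcal{F}^F(t_1)\cdots\mathcal{F}^F(t_p)X)\rhd F$, and the aroma $(u)_\circlearrowleft$ is mapped to the function $\mathcal{F}^F(u)^{i}(E_{i})$ (summed over $i$). *)

theory Defs
  imports Complex_Main
begin

text \<open>Smooth functions on the manifold are modelled by a set
  S of real functions on a point type 'm; the global frame is a finite family of operators
  E :: 'i \<Rightarrow> ('m \<Rightarrow> real) \<Rightarrow> ('m \<Rightarrow> real) which are derivations of S with constant
  structure constants c. Vector fields are represented by their frame components
  'i \<Rightarrow> ('m \<Rightarrow> real).\<close>

definition frame_setting ::
  "('m \<Rightarrow> real) set \<Rightarrow> ('i::finite \<Rightarrow> ('m \<Rightarrow> real) \<Rightarrow> ('m \<Rightarrow> real)) \<Rightarrow> ('i \<Rightarrow> 'i \<Rightarrow> 'i \<Rightarrow> real) \<Rightarrow> bool"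
where
  "frame_setting S E c \<longleftrightarrow>
     (\<forall>a::real. (\<lambda>_. a) \<in> S) \<and>
     (\<forall>f\<in>S. \<forall>g\<in>S. (\<lambda>m. f m + g m) \<in> S \<and> (\<lambda>m. f m * g m) \<in> S) \<and>
     (\<forall>a::real. \<forall>f\<in>S. (\<lambda>m. a * f m) \<in> S) \<and>
     (\<forall>i. \<forall>f\<in>S. E i f \<in> S) \<and>
     (\<forall>i. \<forall>f\<in>S. \<forall>g\<in>S. E i (\<lambda>m. f m + g m) = (\<lambda>m. E i f m + E i g m)) \<and>
     (\<forall>i. \<forall>a::real. \<forall>f\<in>S. E i (\<lambda>m. a * f m) = (\<lambda>m. a * E i f m)) \<and>
     (\<forall>i. \<forall>f\<in>S. \<forall>g\<in>S. E i (\<lambda>m. f m * g m) = (\<lambda>m. E i f m * g m + f m * E i g m)) \<and>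
     (\<forall>i j. \<forall>f\<in>S. (\<lambda>m. E i (E j f) m - E j (E i f) m) = (\<lambda>m. \<Sum>k\<in>UNIV. c i j k * E k f m))"

type_synonym ('i, 'm) vfield = "'i \<Rightarrow> 'm \<Rightarrow> real"

definition smooth_vf :: "('m \<Rightarrow> real) set \<Rightarrow> ('i, 'm) vfield \<Rightarrow> bool" where
  "smooth_vf S X \<longleftrightarrow> (\<forall>i. X i \<in> S)"

text \<open>Frozen product: frozen_aux Xs Op phi = x_1^{i_1}...x_p^{i_p} (O o E_{i_1} o ... o E_{i_p}) phi.\<close>
fun frozen_aux :: "('i::finite \<Rightarrow> ('m \<Rightarrow> real) \<Rightarrow> ('m \<Rightarrow> real)) \<Rightarrow> ('i, 'm) vfield list
                    \<Rightarrow> (('m \<Rightarrow> real) \<Rightarrow> ('m \<Rightarrow> real)) \<Rightarrow> ('m \<Rightarrow> real) \<Rightarrow> ('m \<Rightarrow> real)" where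
  "frozen_aux E [] Op phi = Op phi"
| "frozen_aux E (X # Xs) Op phi = (\<lambda>m. \<Sum>i\<in>UNIV. X i m * frozen_aux E Xs (Op \<circ> E i) phi m)"

definition frozen :: "('i::finite \<Rightarrow> ('m \<Rightarrow> real) \<Rightarrow> ('m \<Rightarrow> real)) \<Rightarrow> ('i, 'm) vfield list
                    \<Rightarrow> ('m \<Rightarrow> real) \<Rightarrow> ('m \<Rightarrow> real)" where
  "frozen E Xs phi = frozen_aux E Xs id phi"

definition frozen_vf :: "('i::finite \<Rightarrow> ('m \<Rightarrow> real) \<Rightarrow> ('m \<Rightarrow> real)) \<Rightarrow> ('i, 'm) vfield list
                    \<Rightarrow> ('i, 'm) vfield \<Rightarrow> ('i, 'm) vfield" where
  "frozen_vf E Xs Y = (\<lambda>j. frozen E Xs (Y j))"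

definition frame_vf :: "'i \<Rightarrow> ('i, 'm) vfield" where
  "frame_vf i = (\<lambda>k _. if k = i then 1 else 0)"

text \<open>Planar rooted trees with one decoration: Node ts is (t_1 ... t_p) \<curvearrowright> \<bullet>.\<close>
datatype ptree = Node "ptree list"

fun elem_diff :: "('i::finite \<Rightarrow> ('m \<Rightarrow> real) \<Rightarrow> ('m \<Rightarrow> real)) \<Rightarrow> ('i, 'm) vfield \<Rightarrow> ptree \<Rightarrow> ('i, 'm) vfield" where
  "elem_diff E F (Node ts) = frozen_vf E (map (elem_diff E F) ts) F"

text \<open>Elementary differential of u = (t_1 ... t_p x) \<curvearrowright> \<bullet> applied to X.\<close>
definition elem_diff_free :: "('i::finite \<Rightarrow> ('m \<Rightarrow> real) \<Rightarrow> ('m \<Rightarrow> real)) \<Rightarrow> ('i, 'm) vfield \<Rightarrow> ptree list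
                              \<Rightarrow> ('i, 'm) vfield \<Rightarrow> ('i, 'm) vfield" where
  "elem_diff_free E F ts X = frozen_vf E (map (elem_diff E F) ts @ [X]) F"

text \<open>Aroma (u)_\<circlearrowleft> mapped to the function sum_i F(u)^i(E_i).\<close>
definition aroma_free :: "('i::finite \<Rightarrow> ('m \<Rightarrow> real) \<Rightarrow> ('m \<Rightarrow> real)) \<Rightarrow> ('i, 'm) vfield \<Rightarrow> ptree list
                          \<Rightarrow> 'm \<Rightarrow> real" where
  "aroma_free E F ts = (\<lambda>m. \<Sum>i\<in>UNIV. elem_diff_free E F ts (frame_vf i) i m)"

definition Div :: "('i::finite \<Rightarrow> ('m \<Rightarrow> real) \<Rightarrow> ('m \<Rightarrow> real)) \<Rightarrow> ('i, 'm) vfield \<Rightarrow> 'm \<Rightarrow> real" where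
  "Div E F = (\<lambda>m. \<Sum>i\<in>UNIV. E i (F i) m)"

end

theory Submission
  imports Defs
begin

lemma fs_facts:
  assumes "frame_setting S E c"
  shows "\<And>a. (\<lambda>_. a) \<in> S"
    and "\<And>f g. f \<in> S \<Longrightarrow> g \<in> S \<Longrightarrow> (\<lambda>m. f m + g m) \<in> S"
    and "\<And>i f. f \<in> S \<Longrightarrow> E i f \<in> S"
    and "\<And>i f g. f \<in> S \<Longrightarrow> g \<in> S \<Longrightarrow> E i (\<lambda>m. f m + g m) = (\<lambda>m. E i f m + E i g m)"
    and "\<And>i a f. f \<in> S \<Longrightarrow> E i (\<lambda>m. a * f m) = (\<lambda>m. a * E i f m)"
  using assms unfolding frame_setting_def by blast+

lemma E_zero:
  assumes "frame_setting S E c"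
  shows "E j (\<lambda>_. 0) = (\<lambda>_. 0)"
proof -
  have "(\<lambda>_. 0::real) \<in> S" using fs_facts(1)[OF assms] .
  from fs_facts(5)[OF assms this, of j 0] show ?thesis by simp
qed

lemma sum_in_S:
  assumes fs: "frame_setting S E c" and g: "\<And>i. g i \<in> S" and A: "finite A"
  shows "(\<lambda>m. \<Sum>i\<in>A. g i m) \<in> S"
  using A
proof (induction A rule: finite_induct)
  case empty
  then show ?case using fs_facts(1)[OF fs, of 0] by simp
next
  case (insert x F)
  then show ?case using fs_facts(2)[OF fs g[of x] insert.IH] by simp
qed

lemma E_sum:
  assumes fs: "frame_setting S E c" and g: "\<And>i. g i \<in> S" and A: "finite A"
  shows "E j (\<lambda>m. \<Sum>i\<in>A. g i m) = (\<lambda>m. \<Sum>i\<in>A. E j (g i) m)"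
  using A
proof (induction A rule: finite_induct)
  case empty
  then show ?case using E_zero[OF fs] by simp
next
  case (insert x F)
  have "E j (\<lambda>m. \<Sum>i\<in>insert x F. g i m) = E j (\<lambda>m. g x m + (\<Sum>i\<in>F. g i m))"
    using insert by simp
  also have "\<dots> = (\<lambda>m. E j (g x) m + E j (\<lambda>m. \<Sum>i\<in>F. g i m) m)"
    using fs_facts(4)[OF fs g[of x] sum_in_S[OF fs g insert(1)]] by simp
  finally show ?case using insert by simp
qed

definition Plin :: "('m \<Rightarrow> real) set \<Rightarrow> (('m \<Rightarrow> real) \<Rightarrow> ('m \<Rightarrow> real)) \<Rightarrow> 'i::finite itself \<Rightarrow> bool" where
  "Plin S Op (T::'i itself) \<longleftrightarrow> (\<forall>g::'i \<Rightarrow> 'm \<Rightarrow> real. (\<forall>i. g i \<in> S) \<longrightarrow>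
      Op (\<lambda>m. \<Sum>i\<in>UNIV. g i m) = (\<lambda>m. \<Sum>i\<in>UNIV. Op (g i) m))"

lemma Plin_comp:
  assumes fs: "frame_setting S E c" and P: "Plin S Op (T::'i::finite itself)"
  shows "Plin S (Op \<circ> E j) T"
  unfolding Plin_def
proof (intro allI impI)
  fix g :: "'i \<Rightarrow> _" assume g: "\<forall>i. g i \<in> S"
  have "(Op \<circ> E j) (\<lambda>m. \<Sum>i\<in>UNIV. g i m) = Op (\<lambda>m. \<Sum>i\<in>UNIV. E j (g i) m)"
    using E_sum[OF fs, of g UNIV j] g by (simp only: comp_apply finite_UNIV)
  also have "\<dots> = (\<lambda>m. \<Sum>i\<in>UNIV. Op (E j (g i)) m)"
  proof -
    have "\<forall>i. E j (g i) \<in> S" using g fs_facts(3)[OF fs] by blast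
    moreover have "\<forall>g::'i \<Rightarrow> _. (\<forall>i. g i \<in> S) \<longrightarrow> Op (\<lambda>m. \<Sum>i\<in>UNIV. g i m) = (\<lambda>m. \<Sum>i\<in>UNIV. Op (g i) m)"
      using P unfolding Plin_def .
    ultimately show ?thesis by (metis (no_types))
  qed
  finally show "(Op \<circ> E j) (\<lambda>m. \<Sum>i\<in>UNIV. g i m) = (\<lambda>m. \<Sum>i\<in>UNIV. (Op \<circ> E j) (g i) m)"
    by simp
qed

lemma frozen_sum:
  assumes fs: "frame_setting S E c" and g: "\<And>i. g i \<in> S"
  shows "Plin S Op (TYPE('i)) \<Longrightarrow> frozen_aux E Ys Op (\<lambda>m. \<Sum>i\<in>(UNIV::'i::finite set). g i m)
      = (\<lambda>m. \<Sum>i\<in>UNIV. frozen_aux E Ys Op (g i) m)"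
proof (induction Ys arbitrary: Op)
  case Nil
  then show ?case using g unfolding Plin_def by simp
next
  case (Cons X Xs)
  have IH: "\<And>j. frozen_aux E Xs (Op \<circ> E j) (\<lambda>m. \<Sum>i\<in>UNIV. g i m)
      = (\<lambda>m. \<Sum>i\<in>UNIV. frozen_aux E Xs (Op \<circ> E j) (g i) m)"
    using Cons.IH Plin_comp[OF fs Cons.prems] by blast
  show ?case
    by (simp add: IH sum_distrib_left) (rule ext, rule sum.swap)
qed

lemma frozen_zero:
  assumes fs: "frame_setting S E c"
  shows "Op (\<lambda>_. 0) = (\<lambda>_. 0) \<Longrightarrow> frozen_aux E Ys Op (\<lambda>_. 0) = (\<lambda>_. 0)"
proof (induction Ys arbitrary: Op)
  case Nil
  then show ?case by simp
next
  case (Cons X Xs)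
  have "\<And>j. frozen_aux E Xs (Op \<circ> E j) (\<lambda>_. 0) = (\<lambda>_. 0)"
    using Cons E_zero[OF fs] by simp
  then show ?case by simp
qed

lemma frozen_snoc:
  "frozen_aux E (Ys @ [frame_vf i]) Op phi = frozen_aux E Ys Op (E i phi)"
proof (induction Ys arbitrary: Op)
  case Nil
  have "(\<lambda>m. \<Sum>k\<in>UNIV. frame_vf i k m * Op (E k phi) m) = Op (E i phi)"
    proof (rule ext)
    fix m
    have "\<And>k. frame_vf i k m * Op (E k phi) m = (if k = i then Op (E i phi) m else 0)"
      by (simp add: frame_vf_def)
    then have "(\<Sum>k\<in>UNIV. frame_vf i k m * Op (E k phi) m) = (\<Sum>k\<in>UNIV. if k = i then Op (E i phi) m else 0)"
      by (intro sum.cong) auto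
    then show "(\<Sum>k\<in>UNIV. frame_vf i k m * Op (E k phi) m) = Op (E i phi) m"
      by simp
  qed
  then show ?case by simp
next
  case (Cons X Xs)
  show ?case by (simp only: append_Cons frozen_aux.simps Cons.IH)
qed

theorem lemma6p8:
  fixes S :: "('m \<Rightarrow> real) set"
    and E :: "'i::finite \<Rightarrow> ('m \<Rightarrow> real) \<Rightarrow> ('m \<Rightarrow> real)"
    and c :: "'i \<Rightarrow> 'i \<Rightarrow> 'i \<Rightarrow> real"
    and F :: "('i, 'm) vfield"
    and ts :: "ptree list"
  assumes "frame_setting S E c"
    and "smooth_vf S F"
    and "Div E F = (\<lambda>_. 0)"
  shows "aroma_free E F ts = (\<lambda>_. 0)"
proof -
  note fs = assms(1)
  define Ys where "Ys = map (elem_diff E F) ts"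
  have g: "\<And>i. E i (F i) \<in> S" using assms(2) fs_facts(3)[OF fs] unfolding smooth_vf_def by blast
  have P: "Plin S id (TYPE('i))" unfolding Plin_def by simp
  have "aroma_free E F ts = (\<lambda>m. \<Sum>i\<in>UNIV. frozen_aux E Ys id (E i (F i)) m)"
    unfolding aroma_free_def elem_diff_free_def frozen_vf_def frozen_def Ys_def frozen_snoc ..
  also have "\<dots> = frozen_aux E Ys id (\<lambda>m. \<Sum>i\<in>UNIV. E i (F i) m)"
    using frozen_sum[OF fs g P] by simp
  also have "(\<lambda>m. \<Sum>i\<in>UNIV. E i (F i) m) = (\<lambda>_. 0)"
    using assms(3) unfolding Div_def .
  also have "frozen_aux E Ys id (\<lambda>_. 0) = (\<lambda>_. 0)"
    using frozen_zero[OF fs] by simp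
  finally show ?thesis .
qed

end
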